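(* Let $\mathcal{H}$ be a separable Hilbert space, $\psi$ convex increasing on $[0,\infty)$ with $\psi(0)=0$, and $(\epsilon_i)$ a strictly stationary $\mathcal{H}$-valued sequence with $\epsilon_i=h(\alpha_i,\alpha_{i-1},\ldots)$, $\alpha_k$ i.i.d., $h$ measurable; let $\epsilon_i^{(m)}=h(\alpha_i,\ldots,\alpha_{i-m+1},\alpha'_{i-m},\ldots)$ with $\alpha'_k$ independent copies of $\alpha_0$, and suppose $\sum_{l\ge m}\|\epsilon_l-\epsilon_l^{(l)}\|_\psi\le\gamma_m$ for all $m\ge1$. Let $W_{n1},\ldots,W_{nn}\ge0$ be deterministic, $\eta_i=W_{ni}\epsilon_i$, $S_n=\sum_i\eta_i$, $\mathcal{G}_i=\sigma(\epsilon_1,\ldots,\epsilon_i)$ ($\mathcal{G}_0$ trivial), $1\le m\le n$ an integer, $T_i=S_n-\sum_{j=i}^{\min(i+m-1,n)}\eta_j$, and $f_i=E[\|T_i\|\mid\mathcal{G}_i]-E[\|T_i\|\mid\mathcal{G}_{i-1}]$. Then for every $a>0$, $P\big(\sum_{i=1}^nf_i>a\big)\le2/\psi\big(a/(2n(\max_{1\le j\le n}W_{nj})\gamma_m)\big)$.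
   Context: $\|Z\|_\psi=\inf\{c>0:E[\psi(\|Z\|/c)]\le1\}$ is the $\psi$-Orlicz norm. *)

theory Defs
  imports "HOL-Probability.Probability"
begin

text \<open>The psi-Orlicz norm inf{c>0 : E[psi(norm Z / c)] <= 1}, valued in ennreal
  (infimum of the empty set is top, i.e. the norm is infinite).\<close>
definition orlicz_norm :: "'a measure \<Rightarrow> (real \<Rightarrow> real) \<Rightarrow> ('a \<Rightarrow> 'h::real_normed_vector) \<Rightarrow> ennreal" where
  "orlicz_norm M \<psi> Z =
     Inf {ennreal c | c. c > 0 \<and> (\<integral>\<^sup>+ x. ennreal (\<psi> (norm (Z x) / c)) \<partial>M) \<le> 1}"

definition gen_sigma :: "'a measure \<Rightarrow> 'i set \<Rightarrow> ('i \<Rightarrow> 'a \<Rightarrow> 'h::topological_space) \<Rightarrow> 'a measure" where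
  "gen_sigma M I X = sigma (space M) {X j -` A \<inter> space M | j A. j \<in> I \<and> A \<in> sets borel}"

end

theory Submission
  imports Defs "HOL-Real_Asymp.Real_Asymp"
begin



lemma iid_distr:
  fixes X :: "'k \<Rightarrow> 'a \<Rightarrow> 'b" and \<sigma> :: "'i \<Rightarrow> 'k"
  assumes P: "prob_space M" and ind: "prob_space.indep_vars M (\<lambda>_. N) X UNIV"
    and meas: "\<And>k. X k \<in> measurable M N" and dist: "\<And>k. distr M N (X k) = D" and inj: "inj \<sigma>"
  shows "distr M (PiM UNIV (\<lambda>_. N)) (\<lambda>\<omega> i. X (\<sigma> i) \<omega>) = PiM UNIV (\<lambda>_. D)"
proof -
  interpret prob_space M by fact
  have pD: "prob_space D" using dist[of undefined] meas[of undefined] by (metis prob_space_distr)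
  interpret PP: product_prob_space "\<lambda>_::'i. D" "UNIV::'i set"
    by (simp add: pD product_prob_space_def product_sigma_finite_def prob_space_imp_sigma_finite product_prob_space_axioms_def)
  have sD: "sets D = sets N" using dist[of undefined] by (metis sets_distr)
  have spD: "space D = space N" using sD by (rule sets_eq_imp_space_eq)
  have mT: "(\<lambda>\<omega> i. X (\<sigma> i) \<omega>) \<in> measurable M (PiM UNIV (\<lambda>_. N))"
    by (rule measurable_PiM_single') (auto intro: measurable_space[OF meas] meas)
  show ?thesis
  proof (rule PP.PiM_eq)
    show "sets (distr M (PiM UNIV (\<lambda>_. N)) (\<lambda>\<omega> i. X (\<sigma> i) \<omega>)) = sets (PiM UNIV (\<lambda>_. D))"
      by (simp add: sD cong: sets_PiM_cong)
  next
    fix J :: "'i set" and F assume J: "finite J" "J \<subseteq> UNIV" and F: "\<And>j. j \<in> J \<Longrightarrow> F j \<in> sets D"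
    have emb: "prod_emb UNIV (\<lambda>_. D) J (Pi\<^sub>E J F) = prod_emb UNIV (\<lambda>_. N) J (Pi\<^sub>E J F)"
      by (simp add: prod_emb_def spD)
    have inS: "prod_emb UNIV (\<lambda>_. N) J (Pi\<^sub>E J F) \<in> sets (PiM UNIV (\<lambda>_. N))"
      using J F sD by (intro sets_PiM_I) auto
    have pre: "(\<lambda>\<omega> i. X (\<sigma> i) \<omega>) -` prod_emb UNIV (\<lambda>_. N) J (Pi\<^sub>E J F) \<inter> space M
        = {\<omega> \<in> space M. \<forall>j\<in>J. X (\<sigma> j) \<omega> \<in> F j}"
      using meas by (auto simp: prod_emb_def PiE_iff intro: measurable_space[OF meas])
    show "emeasure (distr M (PiM UNIV (\<lambda>_. N)) (\<lambda>\<omega> i. X (\<sigma> i) \<omega>)) (prod_emb UNIV (\<lambda>_. D) J (Pi\<^sub>E J F))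
        = (\<Prod>j\<in>J. emeasure D (F j))"
    proof (cases "J = {}")
      case True
      then show ?thesis using emb inS pre
        by (simp add: emeasure_distr mT emeasure_space_1)
    next
      case False
      define A where "A k = F (inv \<sigma> k)" for k
      have "emeasure M {\<omega> \<in> space M. \<forall>j\<in>J. X (\<sigma> j) \<omega> \<in> F j}
          = emeasure M (\<Inter>k\<in>\<sigma>`J. X k -` A k \<inter> space M)"
        using False inj by (intro arg_cong[where f="emeasure M"]) (auto simp: A_def)
      also have "\<dots> = ennreal (prob (\<Inter>k\<in>\<sigma>`J. X k -` A k \<inter> space M))"
        by (simp add: emeasure_eq_measure)
      also have "prob (\<Inter>k\<in>\<sigma>`J. X k -` A k \<inter> space M) = (\<Prod>k\<in>\<sigma>`J. prob (X k -` A k \<inter> space M))"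
        using False J F inj sD by (intro indep_varsD[OF ind]) (auto simp: A_def)
      also have "\<dots> = (\<Prod>j\<in>J. prob (X (\<sigma> j) -` F j \<inter> space M))"
        using inj by (subst prod.reindex) (auto simp: A_def inj_on_def)
      also have "ennreal \<dots> = (\<Prod>j\<in>J. emeasure D (F j))"
      proof -
        have "\<And>j. j \<in> J \<Longrightarrow> emeasure D (F j) = ennreal (prob (X (\<sigma> j) -` F j \<inter> space M))"
          using F sD by (subst dist[symmetric, of "\<sigma> _"]) (simp add: emeasure_distr meas emeasure_eq_measure)
        then show ?thesis by (simp add: prod_ennreal measure_nonneg)
      qed
      finally show ?thesis using emb inS pre by (simp add: emeasure_distr mT)
    qed
  qed
qed




locale psi_fn =
  fixes \<psi> :: "real \<Rightarrow> real"
  assumes cvx: "convex_on {0..} \<psi>" and smono: "strict_mono_on {0..} \<psi>" and z: "\<psi> 0 = 0"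
begin

definition "q x = \<psi> (max x 0)"

lemma mono_psi: "0 \<le> x \<Longrightarrow> x \<le> y \<Longrightarrow> \<psi> x \<le> \<psi> y"
proof (cases "x = y")
  case False
  assume "0 \<le> x" "x \<le> y"
  then show ?thesis using False strict_mono_onD[OF smono, of x y] by auto
qed simp

lemma psi_nonneg: "0 \<le> x \<Longrightarrow> 0 \<le> \<psi> x"
  using mono_psi[of 0 x] z by simp

lemma q_mono: "mono q"
  unfolding q_def mono_def by (auto intro!: mono_psi)

lemma q_nonneg: "0 \<le> q x"
  unfolding q_def by (auto intro!: psi_nonneg)

lemma q_pos: "x \<ge> 0 \<Longrightarrow> q x = \<psi> x"
  unfolding q_def by simp

lemma q_meas[measurable]: "q \<in> borel_measurable borel"
  by (rule borel_measurable_mono[OF q_mono])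

lemma q_convex: "convex_on UNIV q"
proof (rule convex_onI)
  fix t x y :: real assume t: "0 < t" "t < 1"
  have "q ((1 - t) *\<^sub>R x + t *\<^sub>R y) = \<psi> (max ((1 - t) * x + t * y) 0)" by (simp add: q_def)
  also have "\<dots> \<le> \<psi> ((1 - t) * max x 0 + t * max y 0)"
  proof (intro mono_psi)
    have "(1 - t) * x \<le> (1 - t) * max x 0" using t by (intro mult_left_mono) auto
    moreover have "t * y \<le> t * max y 0" using t by (intro mult_left_mono) auto
    moreover have "0 \<le> (1 - t) * max x 0 + t * max y 0" using t by simp
    ultimately show "max ((1 - t) * x + t * y) 0 \<le> (1 - t) * max x 0 + t * max y 0" by simp
  qed simp
  also have "\<dots> \<le> (1 - t) * \<psi> (max x 0) + t * \<psi> (max y 0)"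
    using convex_onD[OF cvx, of t "max x 0" "max y 0"] t by simp
  finally show "q ((1 - t) *\<^sub>R x + t *\<^sub>R y) \<le> (1 - t) * q x + t * q y" by (simp add: q_def)
qed simp

lemma q_cont: "continuous_on UNIV q"
  by (rule convex_on_continuous[OF open_UNIV q_convex])

lemma psi1_pos: "\<psi> 1 > 0"
  using strict_mono_onD[OF smono, of 0 1] z by auto

lemma psi_lin: "1 \<le> x \<Longrightarrow> x * \<psi> 1 \<le> \<psi> x"
proof -
  assume x: "1 \<le> x"
  have "\<psi> ((1 - 1/x) *\<^sub>R 0 + (1/x) *\<^sub>R x) \<le> (1 - 1/x) * \<psi> 0 + (1/x) * \<psi> x"
    using x by (intro convex_onD[OF cvx]) auto
  then have "\<psi> 1 \<le> \<psi> x / x" using x z by simp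
  then show ?thesis using x by (simp add: field_simps)
qed

lemma lin_bound: "0 \<le> x \<Longrightarrow> x \<le> 1 + \<psi> x / \<psi> 1"
proof (cases "x \<le> 1")
  case True
  assume "0 \<le> x" then have "0 \<le> \<psi> x / \<psi> 1" using psi_nonneg[of x] psi1_pos by simp
  then show ?thesis using True by simp
next
  case False
  then show ?thesis using psi_lin[of x] psi1_pos psi_nonneg[of x] by (simp add: field_simps)
qed

lemma psi_unbounded: "\<exists>x\<ge>0. B \<le> \<psi> x"
proof -
  define x where "x = max 1 (B / \<psi> 1)"
  have "B = (B / \<psi> 1) * \<psi> 1" using psi1_pos by simp
  also have "\<dots> \<le> x * \<psi> 1" using psi1_pos unfolding x_def by (intro mult_right_mono) auto
  also have "\<dots> \<le> \<psi> x" by (rule psi_lin) (simp add: x_def)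
  finally have "B \<le> \<psi> x" .
  moreover have "x \<ge> 0" unfolding x_def by linarith
  ultimately show ?thesis by blast
qed

lemma psi_sum:
  assumes "finite A" "\<And>j. j \<in> A \<Longrightarrow> 0 \<le> l j" "sum l A \<le> 1" "\<And>j. j \<in> A \<Longrightarrow> 0 \<le> y j"
  shows "\<psi> (\<Sum>j\<in>A. l j * y j) \<le> (\<Sum>j\<in>A. l j * \<psi> (y j))"
proof -
  define A' where "A' = insert None (Some ` A)"
  define l' where "l' = (\<lambda>k. case k of None \<Rightarrow> 1 - sum l A | Some j \<Rightarrow> l j)"
  define y' where "y' = (\<lambda>k. case k of None \<Rightarrow> 0 | Some j \<Rightarrow> y j)"
  have fin: "finite A'" using assms(1) by (simp add: A'_def)
  have nn: "None \<notin> Some ` A" by auto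
  have s1: "(\<Sum>k\<in>A'. l' k) = 1" unfolding A'_def using assms(1)
    by (subst sum.insert[OF _ nn]) (simp_all add: l'_def sum.reindex)
  have "q (\<Sum>k\<in>A'. l' k *\<^sub>R y' k) \<le> (\<Sum>k\<in>A'. l' k * q (y' k))"
    by (rule convex_on_sum[OF fin _ q_convex s1]) (auto simp: A'_def l'_def assms)
  moreover have "(\<Sum>k\<in>A'. l' k *\<^sub>R y' k) = (\<Sum>j\<in>A. l j * y j)" unfolding A'_def using assms(1)
    by (subst sum.insert[OF _ nn]) (simp_all add: l'_def y'_def sum.reindex)
  moreover have "(\<Sum>k\<in>A'. l' k * q (y' k)) = (\<Sum>j\<in>A. l j * \<psi> (y j))" unfolding A'_def using assms(1,4)
    by (subst sum.insert[OF _ nn]) (simp_all add: l'_def y'_def sum.reindex q_def z)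
  moreover have "(\<Sum>j\<in>A. l j * y j) \<ge> 0" using assms by (auto intro!: sum_nonneg)
  ultimately show ?thesis by (simp add: q_def)
qed


lemma orlicz_lt:
  assumes "orlicz_norm M \<psi> Z < ennreal t" "t > 0"
  shows "(\<integral>\<^sup>+x. ennreal (\<psi> (norm (Z x) / t)) \<partial>M) \<le> 1"
proof -
  obtain c where c: "c > 0" "(\<integral>\<^sup>+ x. ennreal (\<psi> (norm (Z x) / c)) \<partial>M) \<le> 1" "ennreal c < ennreal t"
    using assms(1) unfolding orlicz_norm_def by (auto simp: Inf_less_iff)
  have ct: "c < t" using c(1,3) by (simp add: ennreal_less_iff)
  have "(\<integral>\<^sup>+x. ennreal (\<psi> (norm (Z x) / t)) \<partial>M) \<le> (\<integral>\<^sup>+ x. ennreal (\<psi> (norm (Z x) / c)) \<partial>M)"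
    using c(1) ct by (intro nn_integral_mono ennreal_leI mono_psi) (auto intro!: divide_left_mono)
  then show ?thesis using c(2) by simp
qed

lemma cond_jensen:
  assumes "prob_space M" "sigma_finite_subalgebra M F" and Ym[measurable]: "Y \<in> borel_measurable M"
    and Yp: "\<And>x. Y x \<ge> 0" and c: "c > 0" and bd: "(\<integral>\<^sup>+x. ennreal (\<psi> (Y x / c)) \<partial>M) \<le> 1"
  shows "(\<integral>\<^sup>+x. ennreal (\<psi> (enn2real (nn_cond_exp M F (\<lambda>x. ennreal (Y x)) x) / c)) \<partial>M) \<le> 1"
    and "AE x in M. nn_cond_exp M F (\<lambda>x. ennreal (Y x)) x < \<infinity>"
proof -
  interpret prob_space M by fact
  interpret sigma_finite_subalgebra M F by fact
  define qc where "qc x = q (x / c)" for x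
  have qcm[measurable]: "qc \<in> borel_measurable borel" unfolding qc_def by measurable
  have qcY: "qc (Y x) = \<psi> (Y x / c)" for x using Yp c by (simp add: qc_def q_pos)
  have qcv: "convex_on UNIV qc"
  proof (rule convex_onI)
    fix t x y :: real assume t: "0 < t" "t < 1"
    have "qc ((1 - t) *\<^sub>R x + t *\<^sub>R y) = q ((1 - t) *\<^sub>R (x/c) + t *\<^sub>R (y/c))"
      by (simp add: qc_def add_divide_distrib)
    also have "\<dots> \<le> (1 - t) * q (x/c) + t * q (y/c)" using t by (intro convex_onD[OF q_convex]) auto
    finally show "qc ((1 - t) *\<^sub>R x + t *\<^sub>R y) \<le> (1 - t) * qc x + t * qc y" by (simp add: qc_def)
  qed simp
  have bd': "(\<integral>\<^sup>+x. ennreal (qc (Y x)) \<partial>M) \<le> 1" using bd by (simp add: qcY)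
  have intq: "integrable M (\<lambda>x. qc (Y x))"
  proof (rule integrableI_bounded)
    show "(\<integral>\<^sup>+x. ennreal (norm (qc (Y x))) \<partial>M) < \<infinity>"
      using bd' q_nonneg by (simp add: qc_def top.not_eq_extremum le_less_trans)
  qed measurable
  have Ylin: "Y x \<le> c + (c / \<psi> 1) * qc (Y x)" for x
  proof -
    have "Y x / c \<le> 1 + \<psi> (Y x / c) / \<psi> 1" using Yp c by (intro lin_bound) auto
    then have "Y x \<le> c * (1 + \<psi> (Y x / c) / \<psi> 1)" using c by (simp add: field_simps)
    then show ?thesis by (simp add: qcY algebra_simps)
  qed
  have "(\<integral>\<^sup>+x. ennreal (Y x) \<partial>M) \<le> (\<integral>\<^sup>+x. ennreal c + ennreal (c / \<psi> 1) * ennreal (qc (Y x)) \<partial>M)"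
  proof (intro nn_integral_mono)
    fix x
    have nn: "0 \<le> c / \<psi> 1" "0 \<le> qc (Y x)" using c psi1_pos q_nonneg by (auto simp: qc_def)
    have "ennreal (Y x) \<le> ennreal (c + (c / \<psi> 1) * qc (Y x))" by (rule ennreal_leI[OF Ylin])
    also have "\<dots> = ennreal c + ennreal (c / \<psi> 1) * ennreal (qc (Y x))"
      using nn c by (subst ennreal_plus) (auto simp: ennreal_mult[symmetric] simp del: times_divide_eq_left)
    finally show "ennreal (Y x) \<le> ennreal c + ennreal (c / \<psi> 1) * ennreal (qc (Y x))" .
  qed
  also have "\<dots> = ennreal c + ennreal (c / \<psi> 1) * (\<integral>\<^sup>+x. ennreal (qc (Y x)) \<partial>M)"
    by (simp add: nn_integral_add nn_integral_cmult emeasure_space_1)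
  also have "\<dots> < \<infinity>" using bd' by (simp add: ennreal_mult_less_top top.not_eq_extremum le_less_trans)
  finally have Yfin: "(\<integral>\<^sup>+x. ennreal (Y x) \<partial>M) < \<infinity>" .
  have intY: "integrable M Y"
    by (rule integrableI_bounded) (use Yfin Yp in auto)
  have J: "AE x in M. qc (real_cond_exp M F Y x) \<le> real_cond_exp M F (\<lambda>x. qc (Y x)) x"
    by (rule real_cond_exp_jensens_inequality(2)[where I=UNIV]) (use intY intq qcv in auto)
  have intJ: "integrable M (\<lambda>x. qc (real_cond_exp M F Y x))"
    by (rule integrable_convex_cond_exp[where I=UNIV]) (use intY intq qcv in auto)
  have "(\<integral>x. qc (real_cond_exp M F Y x) \<partial>M) \<le> (\<integral>x. real_cond_exp M F (\<lambda>x. qc (Y x)) x \<partial>M)"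
    by (rule integral_mono_AE[OF intJ real_cond_exp_int(1)[OF intq] J])
  also have "\<dots> = (\<integral>x. qc (Y x) \<partial>M)" by (rule real_cond_exp_int(2)[OF intq])
  finally have I1: "(\<integral>x. qc (real_cond_exp M F Y x) \<partial>M) \<le> (\<integral>x. qc (Y x) \<partial>M)" .
  have "(\<integral>\<^sup>+x. ennreal (qc (real_cond_exp M F Y x)) \<partial>M) = ennreal (\<integral>x. qc (real_cond_exp M F Y x) \<partial>M)"
    by (rule nn_integral_eq_integral[OF intJ]) (simp add: qc_def q_nonneg)
  also have "\<dots> \<le> ennreal (\<integral>x. qc (Y x) \<partial>M)" using I1 by (rule ennreal_leI)
  also have "\<dots> = (\<integral>\<^sup>+x. ennreal (qc (Y x)) \<partial>M)"
    by (rule nn_integral_eq_integral[OF intq, symmetric]) (simp add: qc_def q_nonneg)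
  finally have I2: "(\<integral>\<^sup>+x. ennreal (qc (real_cond_exp M F Y x)) \<partial>M) \<le> 1" using bd' by simp
  have z0: "AE x in M. nn_cond_exp M F (\<lambda>x. ennreal (- Y x)) x = 0"
  proof -
    have "(\<lambda>x. ennreal (- Y x)) = (\<lambda>x. 0)" using Yp by (auto simp: fun_eq_iff ennreal_eq_0_iff)
    moreover have "AE x in M. (\<lambda>x. 0) x = nn_cond_exp M F (\<lambda>x. 0) x"
      by (rule nn_cond_exp_charact) auto
    ultimately show ?thesis by auto
  qed
  have "AE x in M. real_cond_exp M F Y x = enn2real (nn_cond_exp M F (\<lambda>x. ennreal (Y x)) x)"
    using z0 by eventually_elim (simp add: real_cond_exp_def)
  then have "AE x in M. ennreal (qc (real_cond_exp M F Y x)) = ennreal (\<psi> (enn2real (nn_cond_exp M F (\<lambda>x. ennreal (Y x)) x) / c))"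
    by eventually_elim (use c in \<open>simp add: qc_def q_pos\<close>)
  then have "(\<integral>\<^sup>+x. ennreal (qc (real_cond_exp M F Y x)) \<partial>M) = (\<integral>\<^sup>+x. ennreal (\<psi> (enn2real (nn_cond_exp M F (\<lambda>x. ennreal (Y x)) x) / c)) \<partial>M)"
    by (rule nn_integral_cong_AE)
  then show "(\<integral>\<^sup>+x. ennreal (\<psi> (enn2real (nn_cond_exp M F (\<lambda>x. ennreal (Y x)) x) / c)) \<partial>M) \<le> 1"
    using I2 by simp
  have "(\<integral>\<^sup>+x. nn_cond_exp M F (\<lambda>x. ennreal (Y x)) x \<partial>M) = (\<integral>\<^sup>+x. ennreal (Y x) \<partial>M)"
    using nn_cond_exp_intg[of "\<lambda>_. 1" "\<lambda>x. ennreal (Y x)"] by simp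
  then have "AE x in M. nn_cond_exp M F (\<lambda>x. ennreal (Y x)) x \<noteq> \<infinity>"
    using Yfin by (intro nn_integral_PInf_AE) auto
  then show "AE x in M. nn_cond_exp M F (\<lambda>x. ennreal (Y x)) x < \<infinity>"
    by (simp add: top.not_eq_extremum)
qed

end


lemma indep_cond_exp_eq:
  fixes p :: "'x \<Rightarrow> 'h::{real_normed_vector, second_countable_topology}" and r :: "'x \<Rightarrow> 'h"
  assumes P: "prob_space M"
   and ind: "prob_space.indep_var M MA Xa MB Yb"
   and pm[measurable]: "p \<in> borel_measurable MA" and rm[measurable]: "r \<in> borel_measurable MB"
   and F: "sigma_finite_subalgebra M F" and F': "sigma_finite_subalgebra M F'"
   and FF': "sets F' \<subseteq> sets F" and Fv: "sets F \<subseteq> sets (vimage_algebra (space M) Xa MA)"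
   and Pm: "(\<lambda>\<omega>. p (Xa \<omega>)) \<in> borel_measurable F'"
  shows "AE \<omega> in M. nn_cond_exp M F (\<lambda>\<omega>. ennreal (norm (p (Xa \<omega>) + r (Yb \<omega>)))) \<omega>
                 = nn_cond_exp M F' (\<lambda>\<omega>. ennreal (norm (p (Xa \<omega>) + r (Yb \<omega>)))) \<omega>"
proof -
  interpret prob_space M by fact
  have Xm[measurable]: "Xa \<in> measurable M MA" using ind by (rule indep_var_rv1)
  have Ym[measurable]: "Yb \<in> measurable M MB" using ind by (rule indep_var_rv2)
  define DA where "DA = distr M MA Xa"
  define DB where "DB = distr M MB Yb"
  have sDA[measurable_cong]: "sets DA = sets MA" by (simp add: DA_def)
  have sDB[measurable_cong]: "sets DB = sets MB" by (simp add: DB_def)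
  interpret DA: prob_space DA unfolding DA_def by (rule prob_space_distr) simp
  interpret DB: prob_space DB unfolding DB_def by (rule prob_space_distr) simp
  interpret DAB: pair_sigma_finite DA DB by unfold_locales
  define f where "f \<omega> = ennreal (norm (p (Xa \<omega>) + r (Yb \<omega>)))" for \<omega>
  have fm[measurable]: "f \<in> borel_measurable M" unfolding f_def by measurable
  define g where "g z = (\<integral>\<^sup>+ v. ennreal (norm (z + r v)) \<partial>DB)" for z
  have gm[measurable]: "g \<in> borel_measurable borel"
    unfolding g_def by (rule DB.borel_measurable_nn_integral) measurable
  have key: "(\<integral>\<^sup>+\<omega>\<in>A. f \<omega> \<partial>M) = (\<integral>\<^sup>+\<omega>\<in>A. g (p (Xa \<omega>)) \<partial>M)" if A: "A \<in> sets F" for A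
  proof -
    have "A \<in> sets (vimage_algebra (space M) Xa MA)" using A Fv by auto
    then obtain B where B: "B \<in> sets MA" "A = Xa -` B \<inter> space M"
      by (auto simp: sets_vimage_algebra2 measurable_space[OF Xm])
    have "(\<integral>\<^sup>+\<omega>\<in>A. f \<omega> \<partial>M) = (\<integral>\<^sup>+\<omega>. indicator B (Xa \<omega>) * f \<omega> \<partial>M)"
      using B by (intro nn_integral_cong) (auto simp: indicator_def)
    also have "\<dots> = (\<integral>\<^sup>+z. indicator B (fst z) * ennreal (norm (p (fst z) + r (snd z))) \<partial>distr M (MA \<Otimes>\<^sub>M MB) (\<lambda>\<omega>. (Xa \<omega>, Yb \<omega>)))"
      using B by (subst nn_integral_distr) (auto simp: f_def)
    also have "distr M (MA \<Otimes>\<^sub>M MB) (\<lambda>\<omega>. (Xa \<omega>, Yb \<omega>)) = DA \<Otimes>\<^sub>M DB"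
      using ind unfolding indep_var_distribution_eq DA_def DB_def by simp
    also have "(\<integral>\<^sup>+z. indicator B (fst z) * ennreal (norm (p (fst z) + r (snd z))) \<partial>(DA \<Otimes>\<^sub>M DB))
        = (\<integral>\<^sup>+x. (\<integral>\<^sup>+y. indicator B x * ennreal (norm (p x + r y)) \<partial>DB) \<partial>DA)"
    proof -
      let ?F = "\<lambda>z. indicator B (fst z) * ennreal (norm (p (fst z) + r (snd z)))"
      have "(\<integral>\<^sup>+x. (\<integral>\<^sup>+y. ?F (x, y) \<partial>DB) \<partial>DA) = integral\<^sup>N (DA \<Otimes>\<^sub>M DB) ?F"
        by (rule DB.nn_integral_fst) (use B in measurable)
      then show ?thesis by simp
    qed
    also have "\<dots> = (\<integral>\<^sup>+x. indicator B x * g (p x) \<partial>DA)"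
      using B by (intro nn_integral_cong) (simp add: nn_integral_cmult g_def)
    also have "\<dots> = (\<integral>\<^sup>+\<omega>. indicator B (Xa \<omega>) * g (p (Xa \<omega>)) \<partial>M)"
      using B unfolding DA_def by (subst nn_integral_distr) auto
    also have "\<dots> = (\<integral>\<^sup>+\<omega>\<in>A. g (p (Xa \<omega>)) \<partial>M)"
      using B by (intro nn_integral_cong) (auto simp: indicator_def)
    finally show ?thesis .
  qed
  have gP': "(\<lambda>\<omega>. g (p (Xa \<omega>))) \<in> borel_measurable F'" using Pm by measurable
  have gP: "(\<lambda>\<omega>. g (p (Xa \<omega>))) \<in> borel_measurable F"
  proof -
    interpret F: sigma_finite_subalgebra M F by fact
    interpret F': sigma_finite_subalgebra M F' by fact
    have "subalgebra F F'" using F.subalg F'.subalg FF' by (auto simp: subalgebra_def)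
    then show ?thesis by (rule measurable_from_subalg[OF _ gP'])
  qed
  have e1: "AE \<omega> in M. g (p (Xa \<omega>)) = nn_cond_exp M F f \<omega>"
    by (rule sigma_finite_subalgebra.nn_cond_exp_charact[OF F]) (auto simp: key gP)
  have e2: "AE \<omega> in M. g (p (Xa \<omega>)) = nn_cond_exp M F' f \<omega>"
    by (rule sigma_finite_subalgebra.nn_cond_exp_charact[OF F']) (use FF' key gP' in auto)
  from e1 e2 show ?thesis unfolding f_def by eventually_elim simp
qed



lemma gen_sigma_space: "space (gen_sigma M I X) = space M"
  unfolding gen_sigma_def by (rule space_measure_of) auto

lemma gen_sigma_sets: "sets (gen_sigma M I X) = sigma_sets (space M) {X j -` A \<inter> space M | j A. j \<in> I \<and> A \<in> sets borel}"
  unfolding gen_sigma_def by (rule sets_measure_of) auto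

lemma gen_sigma_le:
  assumes "\<And>j. j \<in> I \<Longrightarrow> X j \<in> borel_measurable N'" "space N' = space M"
  shows "sets (gen_sigma M I X) \<subseteq> sets N'"
  unfolding gen_sigma_sets
proof (rule sets.sigma_sets_subset'[of _ N'])
  show "{X j -` A \<inter> space M | j A. j \<in> I \<and> A \<in> sets borel} \<subseteq> sets N'"
    using assms by (auto simp flip: assms(2) intro!: measurable_sets)
qed (metis assms(2) sets.top)

lemma gen_sigma_meas:
  fixes X :: "'i \<Rightarrow> 'a \<Rightarrow> 'h::topological_space"
  assumes "j \<in> I"
  shows "X j \<in> borel_measurable (gen_sigma M I X)"
proof (rule measurableI)
  fix A :: "'h set" assume "A \<in> sets borel"
  then show "X j -` A \<inter> space (gen_sigma M I X) \<in> sets (gen_sigma M I X)"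
    using assms unfolding gen_sigma_sets gen_sigma_space by (intro sigma_sets.Basic) blast
qed auto

lemma gen_sigma_mono:
  assumes "I \<subseteq> J"
  shows "sets (gen_sigma M I X) \<subseteq> sets (gen_sigma M J X)"
  unfolding gen_sigma_sets by (rule sigma_sets_mono') (use assms in blast)

lemma gen_sigma_sub:
  assumes "finite_measure M" "\<And>j. j \<in> I \<Longrightarrow> X j \<in> borel_measurable M"
  shows "sigma_finite_subalgebra M (gen_sigma M I X)"
proof -
  have "subalgebra M (gen_sigma M I X)"
    unfolding subalgebra_def using gen_sigma_le[of I X M M] assms by (auto simp: gen_sigma_space)
  then have "finite_measure_subalgebra M (gen_sigma M I X)"
    using assms(1) by (simp add: finite_measure_subalgebra_def finite_measure_subalgebra_axioms_def)
  then show ?thesis by (rule finite_measure_subalgebra_is_sigma_finite)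
qed



lemma ennreal_diff_bound:
  fixes U V Us Dd Dd' :: ennreal
  assumes "U \<le> Us + Dd" "Us \<le> U + Dd" "V \<le> Us + Dd'" "Us \<le> V + Dd'" "Dd < \<infinity>" "Dd' < \<infinity>"
  shows "\<bar>enn2real U - enn2real V\<bar> \<le> enn2real Dd + enn2real Dd'"
proof (cases "Us = \<infinity>")
  case True
  then have "U = \<infinity>" "V = \<infinity>" using assms by (auto simp: top_unique ennreal_add_eq_top)
  then show ?thesis by simp
next
  case False
  then have us: "Us < \<infinity>" by (simp add: top.not_eq_extremum)
  have s1: "Us + Dd < \<infinity>" "Us + Dd' < \<infinity>" using us assms(5,6) by auto
  have fin: "U < \<infinity>" "V < \<infinity>" "Us < \<infinity>"
    using le_less_trans[OF assms(1) s1(1)] le_less_trans[OF assms(3) s1(2)] us by auto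
  obtain u v us d d' where "U = ennreal u" "V = ennreal v" "Us = ennreal us" "Dd = ennreal d" "Dd' = ennreal d'"
    "0 \<le> u" "0 \<le> v" "0 \<le> us" "0 \<le> d" "0 \<le> d'"
    using fin assms(5,6) by (metis ennreal_cases less_irrefl top.extremum_strict top_neq_ennreal)
  with assms show ?thesis
    by (simp add: ennreal_plus[symmetric] del: ennreal_plus)
qed



lemma cond_tri:
  assumes "sigma_finite_subalgebra M F" and [measurable]: "f \<in> borel_measurable M" "g \<in> borel_measurable M" "k \<in> borel_measurable M"
    and le: "\<And>\<omega>. \<omega> \<in> space M \<Longrightarrow> f \<omega> \<le> g \<omega> + k \<omega>"
  shows "AE \<omega> in M. nn_cond_exp M F f \<omega> \<le> nn_cond_exp M F g \<omega> + nn_cond_exp M F k \<omega>"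
proof -
  interpret sigma_finite_subalgebra M F by fact
  have "AE \<omega> in M. nn_cond_exp M F f \<omega> \<le> nn_cond_exp M F (\<lambda>\<omega>. g \<omega> + k \<omega>) \<omega>"
    by (rule nn_cond_exp_mono) (use le in auto)
  moreover have "AE \<omega> in M. nn_cond_exp M F g \<omega> + nn_cond_exp M F k \<omega> = nn_cond_exp M F (\<lambda>\<omega>. g \<omega> + k \<omega>) \<omega>"
    by (rule nn_cond_exp_sum) auto
  ultimately show ?thesis by eventually_elim simp
qed

lemma rce_nonneg:
  assumes "sigma_finite_subalgebra M F" "\<And>x. Y x \<ge> 0"
  shows "AE x in M. real_cond_exp M F Y x = enn2real (nn_cond_exp M F (\<lambda>x. ennreal (Y x)) x)"
proof -
  interpret sigma_finite_subalgebra M F by fact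
  have z0: "AE x in M. nn_cond_exp M F (\<lambda>x. ennreal (- Y x)) x = 0"
  proof -
    have "(\<lambda>x. ennreal (- Y x)) = (\<lambda>x. 0)" using assms(2) by (auto simp: fun_eq_iff ennreal_eq_0_iff)
    moreover have "AE x in M. (\<lambda>x. 0) x = nn_cond_exp M F (\<lambda>x. 0) x"
      by (rule nn_cond_exp_charact) auto
    ultimately show ?thesis by auto
  qed
  then show ?thesis by eventually_elim (simp add: real_cond_exp_def)
qed


theorem lemma3:
  fixes M :: "'a measure"
    and N :: "'b measure"
    and \<alpha> \<alpha>' :: "int \<Rightarrow> 'a \<Rightarrow> 'b"
    and h :: "(nat \<Rightarrow> 'b) \<Rightarrow> 'h::{real_inner, complete_space, second_countable_topology}"
    and \<psi> :: "real \<Rightarrow> real"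
    and \<gamma> :: "nat \<Rightarrow> real"
    and W :: "nat \<Rightarrow> real"
    and n m :: nat
    and a :: real
    and \<epsilon> \<eta> :: "nat \<Rightarrow> 'a \<Rightarrow> 'h"
    and S :: "'a \<Rightarrow> 'h"
    and T :: "nat \<Rightarrow> 'a \<Rightarrow> 'h"
    and G :: "nat \<Rightarrow> 'a measure"
    and f :: "nat \<Rightarrow> 'a \<Rightarrow> real"
  assumes "prob_space M"
    and \<alpha>_meas: "\<And>k. \<alpha> k \<in> measurable M N" "\<And>k. \<alpha>' k \<in> measurable M N"
    and indep: "prob_space.indep_vars M (\<lambda>_. N)
                  (\<lambda>k. case k of Inl i \<Rightarrow> \<alpha> i | Inr i \<Rightarrow> \<alpha>' i) UNIV"
    and ident: "\<And>k. distr M N (\<alpha> k) = distr M N (\<alpha> 0)" "\<And>k. distr M N (\<alpha>' k) = distr M N (\<alpha> 0)"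
    and h_meas: "h \<in> borel_measurable (PiM UNIV (\<lambda>_::nat. N))"
    and \<psi>_convex: "convex_on {0..} \<psi>"
    and \<psi>_incr: "strict_mono_on {0..} \<psi>"
    and \<psi>0: "\<psi> 0 = 0"
    and \<gamma>_bound: "\<And>m'. m' \<ge> 1 \<Longrightarrow>
        (\<Sum>l. orlicz_norm M \<psi>
           (\<lambda>x. h (\<lambda>k. \<alpha> (int (l + m') - int k) x)
              - h (\<lambda>k. if k < l + m' then \<alpha> (int (l + m') - int k) x
                       else \<alpha>' (int (l + m') - int k) x))) \<le> ennreal (\<gamma> m')"
    and W_nonneg: "\<And>i. i \<in> {1..n} \<Longrightarrow> W i \<ge> 0"
    and m: "1 \<le> m" "m \<le> n"
    and a: "a > 0"
    and \<epsilon>_def: "\<epsilon> =  (\<lambda>i x. h (\<lambda>k. \<alpha> (int i - int k) x))"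
    and \<eta>_def: "\<eta> = (\<lambda>i x. W i *\<^sub>R \<epsilon> i x)"
    and S_def: "S = (\<lambda>x. \<Sum>i=1..n. \<eta> i x)"
    and T_def: "T = (\<lambda>i x. S x - (\<Sum>j=i..min (i + m - 1) n. \<eta> j x))"
    and G_def: "G = (\<lambda>i. gen_sigma M {1..i} \<epsilon>)"
    and f_def: "f = (\<lambda>i x. real_cond_exp M (G i) (\<lambda>y. norm (T i y)) x
                  - real_cond_exp M (G (i - 1)) (\<lambda>y. norm (T i y)) x)"
  shows "measure M {x \<in> space M. (\<Sum>i=1..n. f i x) > a}
           * \<psi> (a / (2 * real n * Max (W ` {1..n}) * \<gamma> m)) \<le> 2"
proof -
  interpret prob_space M by fact
  interpret psi_fn \<psi> using \<psi>_convex \<psi>_incr \<psi>0 by unfold_locales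
  define X where "X = (\<lambda>k. case k of Inl i \<Rightarrow> \<alpha> i | Inr i \<Rightarrow> \<alpha>' i)"
  have Xm[measurable]: "X k \<in> measurable M N" for k by (auto simp: X_def \<alpha>_meas split: sum.split)
  have indX: "indep_vars (\<lambda>_. N) X UNIV" using indep by (simp add: X_def)
  define D0 where "D0 = distr M N (\<alpha> 0)"
  have distX: "distr M N (X k) = D0" for k using ident by (auto simp: X_def D0_def split: sum.split)
  define sh where "sh s = (\<lambda>k::nat+nat. case k of Inl k \<Rightarrow> Inl (s - int k) | Inr k \<Rightarrow> (Inr (s - int k) :: int + int))" for s :: int
  define TT where "TT s = (\<lambda>\<omega> k. X (sh s k) \<omega>)" for s
  have inj_sh: "inj (sh s)" for s by (auto simp: inj_def sh_def split: sum.splits)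
  have TTm[measurable]: "TT s \<in> measurable M (PiM UNIV (\<lambda>_. N))" for s
    unfolding TT_def by (rule measurable_PiM_single') (auto intro: measurable_space[OF Xm] Xm)
  have TTdist: "distr M (PiM UNIV (\<lambda>_. N)) (TT s) = PiM UNIV (\<lambda>_. D0)" for s
    unfolding TT_def by (rule iid_distr[OF \<open>prob_space M\<close> indX Xm distX inj_sh])
  define \<Phi> where "\<Phi> L u = h (\<lambda>k. u (Inl k)) - h (\<lambda>k. if k < L then u (Inl k) else u (Inr k))"
    for L :: nat and u :: "nat + nat \<Rightarrow> 'b"
  have sel1: "(\<lambda>u k. u (Inl k)) \<in> measurable (PiM UNIV (\<lambda>_::nat+nat. N)) (PiM UNIV (\<lambda>_::nat. N))"
    by (rule measurable_PiM_single') (auto simp: space_PiM PiE_iff)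
  have sel2: "(\<lambda>u k. if k < L then u (Inl k) else u (Inr k)) \<in> measurable (PiM UNIV (\<lambda>_::nat+nat. N)) (PiM UNIV (\<lambda>_::nat. N))" for L
    by (rule measurable_PiM_single') (auto simp: space_PiM PiE_iff)
  have \<Phi>m[measurable]: "\<Phi> L \<in> borel_measurable (PiM UNIV (\<lambda>_. N))" for L
    unfolding \<Phi>_def using measurable_compose[OF sel1 h_meas] measurable_compose[OF sel2 h_meas] by measurable
  define \<delta> where "\<delta> L = orlicz_norm M \<psi> (\<lambda>\<omega>. \<Phi> L (TT (int L) \<omega>))" for L
  have intshift: "(\<integral>\<^sup>+ \<omega>. ennreal (\<psi> (norm (\<Phi> L (TT s \<omega>)) / c)) \<partial>M)
      = (\<integral>\<^sup>+ u. ennreal (q (norm (\<Phi> L u) / c)) \<partial>PiM UNIV (\<lambda>_. D0))" if c: "c > 0" for L s c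
  proof -
    have "(\<integral>\<^sup>+ \<omega>. ennreal (\<psi> (norm (\<Phi> L (TT s \<omega>)) / c)) \<partial>M) = (\<integral>\<^sup>+ \<omega>. ennreal (q (norm (\<Phi> L (TT s \<omega>)) / c)) \<partial>M)"
      using c by (simp add: q_pos)
    also have "\<dots> = (\<integral>\<^sup>+ u. ennreal (q (norm (\<Phi> L u) / c)) \<partial>distr M (PiM UNIV (\<lambda>_. N)) (TT s))"
      by (subst nn_integral_distr) auto
    finally show ?thesis by (simp add: TTdist)
  qed
  have shift: "orlicz_norm M \<psi> (\<lambda>\<omega>. \<Phi> L (TT s \<omega>)) = \<delta> L" for L s
    unfolding \<delta>_def orlicz_norm_def
    by (intro arg_cong[where f=Inf] Collect_cong) (metis intshift ennreal_less_zero_iff)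
  have sumd: "(\<Sum>l. \<delta> (l + m)) \<le> ennreal (\<gamma> m)"
  proof -
    have "(\<lambda>l. \<delta> (l + m)) = (\<lambda>l. orlicz_norm M \<psi>
           (\<lambda>x. h (\<lambda>k. \<alpha> (int (l + m) - int k) x)
              - h (\<lambda>k. if k < l + m then \<alpha> (int (l + m) - int k) x
                       else \<alpha>' (int (l + m) - int k) x)))"
      by (simp add: \<delta>_def \<Phi>_def TT_def sh_def X_def cong: if_cong)
    then show ?thesis using \<gamma>_bound[of m] m by simp
  qed
  define K1 where "K1 i = (Inl ` {..int i} :: (int + int) set)" for i :: nat
  define K2 where "K2 i = (Inl ` {int i<..} \<union> range Inr :: (int + int) set)" for i :: nat
  define Xa where "Xa i \<omega> = restrict (\<lambda>k. X k \<omega>) (K1 i)" for i \<omega>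
  define Yb where "Yb i \<omega> = restrict (\<lambda>k. X k \<omega>) (K2 i)" for i \<omega>
  define MA where "MA i = PiM (K1 i) (\<lambda>_. N)" for i
  define MB where "MB i = PiM (K2 i) (\<lambda>_. N)" for i
  have Xam[measurable]: "Xa i \<in> measurable M (MA i)" for i
    unfolding Xa_def MA_def by (rule measurable_restrict) simp
  have indAB: "indep_var (MA i) (Xa i) (MB i) (Yb i)" for i
  proof -
    define K where "K b = (if b then K1 i else K2 i)" for b
    have "indep_vars (\<lambda>b. PiM (K b) (\<lambda>_. N)) (\<lambda>b \<omega>. restrict (\<lambda>k. X k \<omega>) (K b)) UNIV"
      by (rule indep_vars_restrict[OF indX]) (auto simp: K_def K1_def K2_def disjoint_family_on_def)
    moreover have "(\<lambda>b. PiM (K b) (\<lambda>_. N)) = case_bool (MA i) (MB i)"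
      by (rule ext) (simp add: K_def MA_def MB_def split: bool.split)
    moreover have "(\<lambda>b \<omega>. restrict (\<lambda>k. X k \<omega>) (K b)) = case_bool (Xa i) (Yb i)"
      by (rule ext) (simp add: K_def Xa_def Yb_def fun_eq_iff split: bool.split)
    ultimately show ?thesis unfolding indep_var_def by simp
  qed
  define es where "es i j \<omega> = h (\<lambda>k. if k < j - i then \<alpha> (int j - int k) \<omega> else \<alpha>' (int j - int k) \<omega>)" for i j :: nat and \<omega>
  define ea where "ea j u = h (\<lambda>k. u (Inl (int j - int k)))" for j :: nat and u :: "int + int \<Rightarrow> 'b"
  define eb where "eb i j u = h (\<lambda>k. if k < j - i then u (Inl (int j - int k)) else u (Inr (int j - int k)))"
    for i j :: nat and u :: "int + int \<Rightarrow> 'b"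
  have eps_Xa: "\<epsilon> j \<omega> = ea j (Xa i \<omega>)" if "j \<le> i" for i j \<omega>
    using that by (simp add: \<epsilon>_def ea_def Xa_def K1_def X_def)
  have es_Yb: "es i j \<omega> = eb i j (Yb i \<omega>)" for i j \<omega>
    by (simp add: es_def eb_def Yb_def K2_def X_def cong: if_cong)
  have eam: "ea j \<in> borel_measurable (MA i)" if "j \<le> i" for i j
  proof -
    have "(\<lambda>u k. u (Inl (int j - int k))) \<in> measurable (MA i) (PiM UNIV (\<lambda>_::nat. N))"
      unfolding MA_def using that by (intro measurable_PiM_single') (auto simp: space_PiM PiE_iff K1_def)
    then show ?thesis unfolding ea_def using h_meas by measurable
  qed
  have ebm: "eb i j \<in> borel_measurable (MB i)" for i j
  proof -
    have "(\<lambda>u k. if k < j - i then u (Inl (int j - int k)) else u (Inr (int j - int k))) \<in> measurable (MB i) (PiM UNIV (\<lambda>_::nat. N))"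
    proof (intro measurable_PiM_single')
      fix k
      show "(\<lambda>u. if k < j - i then u (Inl (int j - int k)) else u (Inr (int j - int k))) \<in> measurable (MB i) N"
      proof (cases "k < j - i")
        case True
        then have "Inl (int j - int k) \<in> K2 i" by (auto simp: K2_def)
        then show ?thesis using True unfolding MB_def by simp
      next
        case False
        have "Inr (int j - int k) \<in> K2 i" by (auto simp: K2_def)
        then show ?thesis using False unfolding MB_def by simp
      qed
    qed (auto simp: space_PiM PiE_iff K2_def MB_def)
    then show ?thesis unfolding eb_def using h_meas by measurable
  qed
  have diff_eq: "\<epsilon> j \<omega> - es i j \<omega> = \<Phi> (j - i) (TT (int j) \<omega>)" for i j \<omega>
    by (simp add: \<epsilon>_def es_def \<Phi>_def TT_def sh_def X_def cong: if_cong)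
  have epsm[measurable]: "\<epsilon> j \<in> borel_measurable M" for j
  proof -
    have "\<epsilon> j = (\<lambda>\<omega>. ea j (Xa j \<omega>))" by (rule ext) (rule eps_Xa, simp)
    then show ?thesis using measurable_compose[OF Xam eam[of j j]] by simp
  qed
  have esm[measurable]: "es i j \<in> borel_measurable M" for i j
  proof -
    have "es i j = (\<lambda>\<omega>. eb i j (Yb i \<omega>))" by (rule ext) (rule es_Yb)
    then show ?thesis using measurable_compose[OF indep_var_rv2[OF indAB] ebm] by simp
  qed
  have finM: "finite_measure M" using \<open>prob_space M\<close> by (simp add: prob_space_def)
  have Gsub: "sigma_finite_subalgebra M (G i)" for i
    unfolding G_def by (rule gen_sigma_sub[OF finM]) simp
  have Gmono: "sets (G (i - 1)) \<subseteq> sets (G i)" for i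
    unfolding G_def by (rule gen_sigma_mono) auto
  have Gv: "sets (G i) \<subseteq> sets (vimage_algebra (space M) (Xa i) (MA i))" for i
    unfolding G_def
  proof (rule gen_sigma_le)
    fix j assume j: "j \<in> {1..i}"
    have "(\<lambda>\<omega>. ea j (Xa i \<omega>)) \<in> borel_measurable (vimage_algebra (space M) (Xa i) (MA i))"
      by (rule measurable_compose[OF measurable_vimage_algebra1 eam]) (use j measurable_space[OF Xam] in auto)
    moreover have "\<epsilon> j = (\<lambda>\<omega>. ea j (Xa i \<omega>))" using j by (intro ext eps_Xa) simp
    ultimately show "\<epsilon> j \<in> borel_measurable (vimage_algebra (space M) (Xa i) (MA i))" by simp
  qed simp
  define p where "p i u = (\<Sum>j\<in>{1..<i}. W j *\<^sub>R ea j u)" for i u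
  define r where "r i u = (\<Sum>j\<in>{i+m..n}. W j *\<^sub>R eb i j u)" for i u
  define P where "P i \<omega> = (\<Sum>j\<in>{1..<i}. \<eta> j \<omega>)" for i \<omega>
  define R where "R i \<omega> = (\<Sum>j\<in>{i+m..n}. \<eta> j \<omega>)" for i \<omega>
  define Rs where "Rs i \<omega> = (\<Sum>j\<in>{i+m..n}. W j *\<^sub>R es i j \<omega>)" for i \<omega>
  define E where "E i \<omega> = norm (\<Sum>j\<in>{i+m..n}. W j *\<^sub>R \<Phi> (j - i) (TT (int j) \<omega>))" for i \<omega>
  have P_p: "P i = (\<lambda>\<omega>. p i (Xa i \<omega>))" for i
    unfolding P_def p_def \<eta>_def by (intro ext sum.cong refl) (simp add: eps_Xa)
  have Rs_r: "Rs i = (\<lambda>\<omega>. r i (Yb i \<omega>))" for i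
    unfolding Rs_def r_def by (intro ext sum.cong refl) (simp add: es_Yb)
  have pm: "p i \<in> borel_measurable (MA i)" for i
      unfolding p_def by (intro borel_measurable_sum borel_measurable_scaleR measurable_const eam) auto
  have rm: "r i \<in> borel_measurable (MB i)" for i
    unfolding r_def by (intro borel_measurable_sum borel_measurable_scaleR measurable_const ebm) auto
  have Pm: "(\<lambda>\<omega>. p i (Xa i \<omega>)) \<in> borel_measurable (G (i - 1))" for i
    unfolding P_p[symmetric] P_def \<eta>_def G_def
    by (intro borel_measurable_sum borel_measurable_scaleR measurable_const gen_sigma_meas) auto
  have Pm'[measurable]: "P i \<in> borel_measurable M" for i unfolding P_def \<eta>_def by measurable
  have Rm[measurable]: "R i \<in> borel_measurable M" for i unfolding R_def \<eta>_def by measurable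
  have Rsm[measurable]: "Rs i \<in> borel_measurable M" for i unfolding Rs_def by measurable
  have Em[measurable]: "E i \<in> borel_measurable M" for i unfolding E_def by measurable
  have Tm[measurable]: "T i \<in> borel_measurable M" for i unfolding T_def S_def \<eta>_def by measurable
  have T_split: "T i \<omega> = P i \<omega> + R i \<omega>" if i: "i \<in> {1..n}" for i \<omega>
  proof -
    have U: "{1..n} = {1..<i} \<union> ({i..min (i+m-1) n} \<union> {i+m..n})" using i m by auto
    have "(\<Sum>j\<in>{1..n}. \<eta> j \<omega>) = (\<Sum>j\<in>{1..<i}. \<eta> j \<omega>) + (\<Sum>j\<in>{i..min (i+m-1) n} \<union> {i+m..n}. \<eta> j \<omega>)"
      unfolding U by (rule sum.union_disjoint) auto
    also have "(\<Sum>j\<in>{i..min (i+m-1) n} \<union> {i+m..n}. \<eta> j \<omega>) = (\<Sum>j=i..min (i + m - 1) n. \<eta> j \<omega>) + R i \<omega>"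
      unfolding R_def by (rule sum.union_disjoint) (use m in auto)
    finally have "S \<omega> = P i \<omega> + ((\<Sum>j=i..min (i + m - 1) n. \<eta> j \<omega>) + R i \<omega>)"
      unfolding S_def P_def .
    then show ?thesis unfolding T_def by (simp add: algebra_simps)
  qed
  have RRs: "R i \<omega> - Rs i \<omega> = (\<Sum>j\<in>{i+m..n}. W j *\<^sub>R \<Phi> (j - i) (TT (int j) \<omega>))" for i \<omega>
    unfolding R_def Rs_def \<eta>_def by (simp add: sum_subtractf[symmetric] scaleR_diff_right[symmetric] diff_eq)
  define NT where "NT i \<omega> = ennreal (norm (T i \<omega>))" for i \<omega>
  define NTs where "NTs i \<omega> = ennreal (norm (P i \<omega> + Rs i \<omega>))" for i \<omega>
  define NE where "NE i \<omega> = ennreal (E i \<omega>)" for i \<omega>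
  have [measurable]: "NT i \<in> borel_measurable M" "NTs i \<in> borel_measurable M" "NE i \<in> borel_measurable M" for i
    unfolding NT_def NTs_def NE_def by measurable
  have Ueq: "AE \<omega> in M. nn_cond_exp M (G i) (NTs i) \<omega> = nn_cond_exp M (G (i - 1)) (NTs i) \<omega>" for i
  proof -
    have "AE \<omega> in M. nn_cond_exp M (G i) (\<lambda>\<omega>. ennreal (norm (p i (Xa i \<omega>) + r i (Yb i \<omega>)))) \<omega>
       = nn_cond_exp M (G (i - 1)) (\<lambda>\<omega>. ennreal (norm (p i (Xa i \<omega>) + r i (Yb i \<omega>)))) \<omega>"
      apply (rule indep_cond_exp_eq[where p="p i" and r="r i" and Xa="Xa i" and Yb="Yb i" and MA="MA i" and MB="MB i"])
      apply (rule \<open>prob_space M\<close>)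
      apply (rule indAB)
      apply (rule pm)
      apply (rule rm)
      apply (rule Gsub)
      apply (rule Gsub)
      apply (rule Gmono)
      apply (rule Gv)
      apply (rule Pm)
      done
    then show ?thesis unfolding NTs_def P_p Rs_r .
  qed
  have tri1: "NT i \<omega> \<le> NTs i \<omega> + NE i \<omega>" "NTs i \<omega> \<le> NT i \<omega> + NE i \<omega>" if i: "i \<in> {1..n}" for i \<omega>
  proof -
    have e: "E i \<omega> = norm (R i \<omega> - Rs i \<omega>)" by (simp add: E_def RRs)
    have "norm (T i \<omega>) \<le> norm (P i \<omega> + Rs i \<omega>) + E i \<omega>"
      unfolding e T_split[OF i] by (rule order_trans[OF _ norm_triangle_ineq]) simp
    then have "ennreal (norm (T i \<omega>)) \<le> ennreal (norm (P i \<omega> + Rs i \<omega>) + E i \<omega>)" by (rule ennreal_leI)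
    then show "NT i \<omega> \<le> NTs i \<omega> + NE i \<omega>" unfolding NT_def NTs_def NE_def
      by (simp add: ennreal_plus E_def)
    have "norm (P i \<omega> + Rs i \<omega>) \<le> norm (T i \<omega>) + E i \<omega>"
    proof -
      have "norm (P i \<omega> + Rs i \<omega>) = norm ((P i \<omega> + R i \<omega>) + (Rs i \<omega> - R i \<omega>))" by simp
      also have "\<dots> \<le> norm (P i \<omega> + R i \<omega>) + norm (Rs i \<omega> - R i \<omega>)" by (rule norm_triangle_ineq)
      finally show ?thesis unfolding e T_split[OF i] by (simp add: norm_minus_commute)
    qed
    then have "ennreal (norm (P i \<omega> + Rs i \<omega>)) \<le> ennreal (norm (T i \<omega>) + E i \<omega>)" by (rule ennreal_leI)
    then show "NTs i \<omega> \<le> NT i \<omega> + NE i \<omega>" unfolding NT_def NTs_def NE_def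
      by (simp add: ennreal_plus E_def)
  qed
  define w where "w = Max (W ` {1..n})"
  have wge: "W j \<le> w" if "j \<in> {1..n}" for j using that by (simp add: w_def)
  have w0: "0 \<le> w" using wge[of 1] W_nonneg[of 1] m by auto
  have Ebound: "(\<integral>\<^sup>+\<omega>. ennreal (\<psi> (E i \<omega> / c)) \<partial>M) \<le> 1" if i: "i \<in> {1..n}" and c: "c > 0" "c > w * \<gamma> m" for i c
  proof -
    define J where "J = {i+m..n}"
    have finJ: "finite J" by (simp add: J_def)
    have JW: "j \<in> {1..n}" if "j \<in> J" for j using that i m by (auto simp: J_def)
    have sumJ: "(\<Sum>j\<in>J. \<delta> (j - i)) \<le> ennreal (\<gamma> m)"
    proof -
      have "(\<Sum>j\<in>J. \<delta> (j - i)) = (\<Sum>l\<in>(\<lambda>j. j - i - m) ` J. \<delta> (l + m))"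
        by (subst sum.reindex) (auto simp: inj_on_def J_def intro!: sum.cong)
      also have "\<dots> \<le> (\<Sum>l. \<delta> (l + m))" by (rule sum_le_suminf) (auto simp: finJ)
      also have "\<dots> \<le> ennreal (\<gamma> m)" by (rule sumd)
      finally show ?thesis .
    qed
    define d where "d j = enn2real (\<delta> (j - i))" for j
    have dfin: "\<delta> (j - i) = ennreal (d j)" if "j \<in> J" for j
    proof -
      have "\<delta> (j - i) \<le> (\<Sum>j\<in>J. \<delta> (j - i))" by (rule member_le_sum) (use that finJ in auto)
      also have "\<dots> < \<infinity>" using sumJ by (simp add: le_less_trans)
      finally show ?thesis unfolding d_def by (simp add: ennreal_enn2real less_top)
    qed
    have d0: "0 \<le> d j" for j by (simp add: d_def)
    define \<Delta> where "\<Delta> = sum d J"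
    have \<Delta>0: "0 \<le> \<Delta>" unfolding \<Delta>_def by (simp add: sum_nonneg d0)
    have "ennreal \<Delta> = (\<Sum>j\<in>J. \<delta> (j - i))" unfolding \<Delta>_def using d0 dfin by (simp add: sum_ennreal[symmetric] del: sum_ennreal)
    with sumJ have \<Delta>le: "ennreal \<Delta> \<le> ennreal (\<gamma> m)" by simp
    have w\<Delta>: "w * \<Delta> < c"
    proof (cases "\<gamma> m \<ge> 0")
      case True
      then have "\<Delta> \<le> \<gamma> m" using \<Delta>le by (simp add: ennreal_le_iff)
      then have "w * \<Delta> \<le> w * \<gamma> m" using w0 by (rule mult_left_mono)
      then show ?thesis using c by simp
    next
      case False
      then have "ennreal (\<gamma> m) = 0" by (simp add: ennreal_neg)
      then have "ennreal \<Delta> = 0" using \<Delta>le by simp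
      then have "\<Delta> = 0" using \<Delta>0 by (simp add: ennreal_eq_0_iff)
      then show ?thesis using c by simp
    qed
    define K where "K = real (card J)"
    have K0: "0 \<le> K" by (simp add: K_def)
    define s where "s = (c - w * \<Delta>) / (K * w + 1)"
    have KW: "0 < K * w + 1" using K0 w0 by (simp add: add_nonneg_pos)
    have s0: "s > 0" unfolding s_def using w\<Delta> KW by simp
    define cj where "cj j = d j + s" for j
    have cj0: "cj j > 0" for j using d0[of j] s0 by (simp add: cj_def)
    have cjne: "cj j \<noteq> 0" for j using cj0[of j] by simp
    have cjge: "0 \<le> cj j" for j using cj0[of j] by simp
    have sumcj: "w * sum cj J \<le> c"
    proof -
      have "sum cj J = \<Delta> + K * s" by (simp add: cj_def sum.distrib \<Delta>_def K_def)
      moreover have "w * (K * s) \<le> c - w * \<Delta>"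
      proof -
        have "w * (K * s) = (K * w) / (K * w + 1) * (c - w * \<Delta>)" by (simp add: s_def field_simps)
        also have "\<dots> \<le> 1 * (c - w * \<Delta>)" using KW w\<Delta> by (intro mult_right_mono) auto
        finally show ?thesis by simp
      qed
      ultimately show ?thesis by (simp add: algebra_simps)
    qed
    have orl: "(\<integral>\<^sup>+\<omega>. ennreal (q (norm (\<Phi> (j - i) (TT (int j) \<omega>)) / cj j)) \<partial>M) \<le> 1" if j: "j \<in> J" for j
    proof -
      have "orlicz_norm M \<psi> (\<lambda>\<omega>. \<Phi> (j - i) (TT (int j) \<omega>)) < ennreal (cj j)"
        using dfin[OF j] s0 d0[of j] by (simp add: shift cj_def ennreal_less_iff)
      from orlicz_lt[OF this cj0] show ?thesis using cj0[of j] by (simp add: q_pos)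
    qed
    define lam where "lam j = W j * cj j / c" for j
    have lam0: "0 \<le> lam j" if "j \<in> J" for j using W_nonneg[OF JW[OF that]] cj0[of j] c by (simp add: lam_def)
    have lamsum: "sum lam J \<le> 1"
    proof -
      have "sum lam J = (\<Sum>j\<in>J. W j * cj j) / c" by (simp add: lam_def sum_divide_distrib)
      also have "\<dots> \<le> (w * sum cj J) / c"
        using c by (intro divide_right_mono) (auto simp: sum_distrib_left intro!: sum_mono mult_right_mono wge JW less_imp_le[OF cj0])
      also have "\<dots> \<le> 1" using sumcj c by simp
      finally show ?thesis .
    qed
    have pw: "ennreal (\<psi> (E i \<omega> / c)) \<le> (\<Sum>j\<in>J. ennreal (lam j) * ennreal (q (norm (\<Phi> (j - i) (TT (int j) \<omega>)) / cj j)))" for \<omega>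
    proof -
      let ?y = "\<lambda>j. norm (\<Phi> (j - i) (TT (int j) \<omega>)) / cj j"
      have "E i \<omega> \<le> (\<Sum>j\<in>J. norm (W j *\<^sub>R \<Phi> (j - i) (TT (int j) \<omega>)))" unfolding E_def J_def by (rule norm_sum)
      also have "\<dots> = (\<Sum>j\<in>J. W j * norm (\<Phi> (j - i) (TT (int j) \<omega>)))"
        using W_nonneg JW by (intro sum.cong) auto
      finally have "E i \<omega> / c \<le> (\<Sum>j\<in>J. W j * norm (\<Phi> (j - i) (TT (int j) \<omega>))) / c" using c by (simp add: divide_right_mono)
      also have "\<dots> = (\<Sum>j\<in>J. lam j * ?y j)"
        unfolding sum_divide_distrib lam_def using cj0 by (intro sum.cong) (auto simp: field_simps cjne)
      finally have "\<psi> (E i \<omega> / c) \<le> \<psi> (\<Sum>j\<in>J. lam j * ?y j)" using c by (intro mono_psi) (auto simp: E_def)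
      also have "\<dots> \<le> (\<Sum>j\<in>J. lam j * \<psi> (?y j))"
        by (rule psi_sum[OF finJ _ lamsum]) (auto intro!: lam0 divide_nonneg_nonneg cjge)
      also have "\<dots> = (\<Sum>j\<in>J. lam j * q (?y j))" by (intro sum.cong) (auto simp: q_pos cjge)
      finally have "ennreal (\<psi> (E i \<omega> / c)) \<le> ennreal (\<Sum>j\<in>J. lam j * q (?y j))" by (rule ennreal_leI)
      also have "\<dots> = (\<Sum>j\<in>J. ennreal (lam j) * ennreal (q (?y j)))"
        using lam0 q_nonneg by (simp add: sum_ennreal[symmetric] ennreal_mult del: sum_ennreal)
      finally show ?thesis .
    qed
    have "(\<integral>\<^sup>+\<omega>. ennreal (\<psi> (E i \<omega> / c)) \<partial>M) \<le> (\<integral>\<^sup>+\<omega>. (\<Sum>j\<in>J. ennreal (lam j) * ennreal (q (norm (\<Phi> (j - i) (TT (int j) \<omega>)) / cj j))) \<partial>M)"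
      by (rule nn_integral_mono) (rule pw)
    also have "\<dots> = (\<Sum>j\<in>J. ennreal (lam j) * (\<integral>\<^sup>+\<omega>. ennreal (q (norm (\<Phi> (j - i) (TT (int j) \<omega>)) / cj j)) \<partial>M))"
      by (subst nn_integral_sum) (auto simp: nn_integral_cmult)
    also have "\<dots> \<le> (\<Sum>j\<in>J. ennreal (lam j) * 1)"
      by (intro sum_mono mult_left_mono orl) auto
    also have "\<dots> = ennreal (sum lam J)" using lam0 by simp
    also have "\<dots> \<le> 1" using lamsum by simp
    finally show ?thesis .
  qed
  have NE_eq: "NE i = (\<lambda>\<omega>. ennreal (E i \<omega>))" for i by (simp add: NE_def fun_eq_iff)
  have Jb: "(\<integral>\<^sup>+\<omega>. ennreal (\<psi> (enn2real (nn_cond_exp M (G i') (NE i) \<omega>) / c)) \<partial>M) \<le> 1"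
       "AE \<omega> in M. nn_cond_exp M (G i') (NE i) \<omega> < \<infinity>"
    if i: "i \<in> {1..n}" and c: "c > 0" "c > w * \<gamma> m" for i i' c
    using cond_jensen[OF \<open>prob_space M\<close> Gsub[of i'] Em[of i] _ c(1) Ebound[OF i c]] unfolding NE_eq
    by (auto simp: E_def)
  define c1 where "c1 = \<bar>w * \<gamma> m\<bar> + 1"
  have c1: "c1 > 0" "c1 > w * \<gamma> m" by (auto simp: c1_def)
  have fbound: "AE \<omega> in M. \<bar>f i \<omega>\<bar> \<le> enn2real (nn_cond_exp M (G i) (NE i) \<omega>) + enn2real (nn_cond_exp M (G (i - 1)) (NE i) \<omega>)"
    if i: "i \<in> {1..n}" for i
  proof -
    have NT_eq: "NT i = (\<lambda>\<omega>. ennreal (norm (T i \<omega>)))" by (simp add: NT_def fun_eq_iff)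
    have r1: "AE \<omega> in M. real_cond_exp M (G i') (\<lambda>y. norm (T i y)) \<omega> = enn2real (nn_cond_exp M (G i') (NT i) \<omega>)" for i'
      unfolding NT_eq by (rule rce_nonneg[OF Gsub]) simp
    have a1: "AE \<omega> in M. nn_cond_exp M (G i') (NT i) \<omega> \<le> nn_cond_exp M (G i') (NTs i) \<omega> + nn_cond_exp M (G i') (NE i) \<omega>" for i'
      by (rule cond_tri[OF Gsub]) (auto intro: tri1(1)[OF i])
    have a2: "AE \<omega> in M. nn_cond_exp M (G i') (NTs i) \<omega> \<le> nn_cond_exp M (G i') (NT i) \<omega> + nn_cond_exp M (G i') (NE i) \<omega>" for i'
      by (rule cond_tri[OF Gsub]) (auto intro: tri1(2)[OF i])
    note fin = Jb(2)[OF i c1]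
    from r1[of i] r1[of "i - 1"] a1[of i] a1[of "i - 1"] a2[of i] a2[of "i - 1"] fin[of i] fin[of "i - 1"] Ueq[of i]
    show ?thesis
    proof eventually_elim
      case (elim \<omega>)
      have "f i \<omega> = enn2real (nn_cond_exp M (G i) (NT i) \<omega>) - enn2real (nn_cond_exp M (G (i - 1)) (NT i) \<omega>)"
        using elim(1,2) by (simp add: f_def)
      also have "\<bar>\<dots>\<bar> \<le> enn2real (nn_cond_exp M (G i) (NE i) \<omega>) + enn2real (nn_cond_exp M (G (i - 1)) (NE i) \<omega>)"
        by (rule ennreal_diff_bound) (use elim in auto)
      finally show ?case .
    qed
  qed
  define A where "A = {x \<in> space M. (\<Sum>i=1..n. f i x) > a}"
  have fm[measurable]: "f i \<in> borel_measurable M" for i unfolding f_def by measurable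
  have Am[measurable]: "A \<in> sets M" unfolding A_def by measurable
  have mainb: "measure M A * \<psi> (a / (2 * real n * c)) \<le> 1" if c: "c > 0" "c > w * \<gamma> m" for c
  proof -
    define dd where "dd i b \<omega> = enn2real (nn_cond_exp M (G (if b then i else i - 1)) (NE i) \<omega>)" for i b \<omega>
    define I2 where "I2 = {1..n} \<times> (UNIV :: bool set)"
    have finI2: "finite I2" by (simp add: I2_def)
    have n0: "real n > 0" using m by simp
    have cardI2: "real (card I2) = 2 * real n" by (simp add: I2_def card_cartesian_product)
    have dd0: "0 \<le> dd i b \<omega>" for i b \<omega> by (simp add: dd_def)
    have AEall: "AE \<omega> in M. \<forall>i\<in>{1..n}. \<bar>f i \<omega>\<bar> \<le> dd i True \<omega> + dd i False \<omega>"
      unfolding AE_finite_all[OF finite_atLeastAtMost] using fbound by (simp add: dd_def)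
    have pw: "indicator A \<omega> * ennreal (\<psi> (a / (2 * real n * c)))
        \<le> (\<Sum>k\<in>I2. ennreal (1 / (2 * real n)) * ennreal (q (dd (fst k) (snd k) \<omega> / c)))"
      if \<omega>: "\<omega> \<in> space M" "\<forall>i\<in>{1..n}. \<bar>f i \<omega>\<bar> \<le> dd i True \<omega> + dd i False \<omega>" for \<omega>
    proof (cases "\<omega> \<in> A")
      case True
      then have "a < (\<Sum>i=1..n. f i \<omega>)" by (simp add: A_def)
      also have "\<dots> \<le> (\<Sum>i=1..n. dd i True \<omega> + dd i False \<omega>)"
      proof (intro sum_mono)
        fix i assume "i \<in> {1..n}"
        then have "\<bar>f i \<omega>\<bar> \<le> dd i True \<omega> + dd i False \<omega>" using \<omega>(2) by blast
        then show "f i \<omega> \<le> dd i True \<omega> + dd i False \<omega>" by linarith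
      qed
      also have "\<dots> = (\<Sum>k\<in>I2. dd (fst k) (snd k) \<omega>)"
      proof -
        have "(\<Sum>k\<in>I2. dd (fst k) (snd k) \<omega>) = (\<Sum>i=1..n. \<Sum>b\<in>UNIV. dd i b \<omega>)"
          unfolding I2_def sum.cartesian_product by (simp add: split_def)
        then show ?thesis by (simp add: UNIV_bool add.commute)
      qed
      finally have "a / (2 * real n * c) \<le> (\<Sum>k\<in>I2. 1 / (2 * real n) * (dd (fst k) (snd k) \<omega> / c))"
        using c n0 by (simp add: sum_divide_distrib[symmetric] sum_distrib_left[symmetric] field_simps)
      then have "\<psi> (a / (2 * real n * c)) \<le> \<psi> (\<Sum>k\<in>I2. 1 / (2 * real n) * (dd (fst k) (snd k) \<omega> / c))"
        using a c n0 by (intro mono_psi) auto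
      also have "\<dots> \<le> (\<Sum>k\<in>I2. 1 / (2 * real n) * \<psi> (dd (fst k) (snd k) \<omega> / c))"
        by (rule psi_sum[OF finI2]) (use n0 c dd0 cardI2 in auto)
      also have "\<dots> = (\<Sum>k\<in>I2. 1 / (2 * real n) * q (dd (fst k) (snd k) \<omega> / c))"
        using c by (intro sum.cong) (auto simp: q_pos dd0)
      finally have "ennreal (\<psi> (a / (2 * real n * c))) \<le> ennreal (\<Sum>k\<in>I2. 1 / (2 * real n) * q (dd (fst k) (snd k) \<omega> / c))"
        by (rule ennreal_leI)
      also have "\<dots> = (\<Sum>k\<in>I2. ennreal (1 / (2 * real n) * q (dd (fst k) (snd k) \<omega> / c)))"
        by (rule sum_ennreal[symmetric]) (use n0 q_nonneg in simp)
      also have "\<dots> = (\<Sum>k\<in>I2. ennreal (1 / (2 * real n)) * ennreal (q (dd (fst k) (snd k) \<omega> / c)))"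
        by (intro sum.cong refl ennreal_mult) (use n0 q_nonneg in auto)
      finally show ?thesis using True by simp
    qed simp
    have "ennreal (measure M A) * ennreal (\<psi> (a / (2 * real n * c))) = (\<integral>\<^sup>+\<omega>. indicator A \<omega> * ennreal (\<psi> (a / (2 * real n * c))) \<partial>M)"
    proof -
      have "(\<integral>\<^sup>+\<omega>. indicator A \<omega> * ennreal (\<psi> (a / (2 * real n * c))) \<partial>M)
          = (\<integral>\<^sup>+\<omega>. ennreal (\<psi> (a / (2 * real n * c))) * indicator A \<omega> \<partial>M)"
        by (simp only: mult.commute)
      also have "\<dots> = ennreal (\<psi> (a / (2 * real n * c))) * emeasure M A"
        by (rule nn_integral_cmult_indicator[OF Am])
      finally show ?thesis by (simp add: emeasure_eq_measure mult.commute)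
    qed
    also have "\<dots> \<le> (\<integral>\<^sup>+\<omega>. (\<Sum>k\<in>I2. ennreal (1 / (2 * real n)) * ennreal (q (dd (fst k) (snd k) \<omega> / c))) \<partial>M)"
    proof (rule nn_integral_mono_AE)
      show "AE \<omega> in M. indicator A \<omega> * ennreal (\<psi> (a / (2 * real n * c)))
        \<le> (\<Sum>k\<in>I2. ennreal (1 / (2 * real n)) * ennreal (q (dd (fst k) (snd k) \<omega> / c)))"
        using AEall by (rule AE_mp) (auto intro!: AE_I2 pw)
    qed
    also have "\<dots> = (\<Sum>k\<in>I2. ennreal (1 / (2 * real n)) * (\<integral>\<^sup>+\<omega>. ennreal (q (dd (fst k) (snd k) \<omega> / c)) \<partial>M))"
      by (subst nn_integral_sum) (auto simp: nn_integral_cmult dd_def)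
    also have "\<dots> \<le> (\<Sum>k\<in>I2. ennreal (1 / (2 * real n)) * 1)"
    proof (intro sum_mono mult_left_mono)
      fix k assume k: "k \<in> I2"
      have "(\<integral>\<^sup>+\<omega>. ennreal (q (dd (fst k) (snd k) \<omega> / c)) \<partial>M) = (\<integral>\<^sup>+\<omega>. ennreal (\<psi> (dd (fst k) (snd k) \<omega> / c)) \<partial>M)"
        using c by (intro nn_integral_cong) (simp add: q_pos dd0)
      also have "\<dots> \<le> 1" unfolding dd_def using k c by (intro Jb(1)) (auto simp: I2_def)
      finally show "(\<integral>\<^sup>+\<omega>. ennreal (q (dd (fst k) (snd k) \<omega> / c)) \<partial>M) \<le> 1" .
    qed simp
    also have "\<dots> = ennreal (\<Sum>k\<in>I2. 1 / (2 * real n))"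
      unfolding mult_1_right by (rule sum_ennreal) (use n0 in simp)
    also have "\<dots> = 1" using cardI2 n0 by simp
    finally have "ennreal (measure M A * \<psi> (a / (2 * real n * c))) \<le> 1"
      using n0 c a by (subst ennreal_mult) (auto intro!: psi_nonneg)
    then show ?thesis by (simp add: ennreal_le_1)
  qed
  have mA0: "0 \<le> measure M A" by simp
  show ?thesis unfolding A_def[symmetric] w_def[symmetric]
  proof -
    consider "w * \<gamma> m = 0" | "w * \<gamma> m < 0" | "w * \<gamma> m > 0" by linarith
    then show "measure M A * \<psi> (a / (2 * real n * w * \<gamma> m)) \<le> 2"
    proof cases
      case 1
      then have "2 * real n * w * \<gamma> m = 0" by simp
      then have eq: "a / (2 * real n * w * \<gamma> m) = 0" by (simp only: div_by_0)
      show ?thesis unfolding eq \<psi>0 by simp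
    next
      case 2
      have "measure M A = 0"
      proof (rule ccontr)
        assume "measure M A \<noteq> 0"
        then have pos: "measure M A > 0" using mA0 by linarith
        obtain x where x: "x \<ge> 0" "2 / measure M A \<le> \<psi> x" using psi_unbounded by blast
        have "x \<noteq> 0" using x pos \<psi>0 by (auto simp: field_simps)
        then have xp: "x > 0" using x by simp
        define cc where "cc = a / (2 * real n * x)"
        have cc0: "cc > 0" using a xp m by (auto simp: cc_def)
        have cc: "cc > 0" "cc > w * \<gamma> m" using cc0 2 by auto
        have "a / (2 * real n * cc) = x" using a xp m by (simp add: cc_def field_simps)
        then have "measure M A * \<psi> x \<le> 1" using mainb[OF cc] by simp
        moreover have "2 \<le> measure M A * \<psi> x" using x pos by (simp add: field_simps)
        ultimately show False by simp
      qed
      then show ?thesis by simp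
    next
      case 3
      define c0 where "c0 = w * \<gamma> m"
      define x0 where "x0 = a / (2 * real n * c0)"
      have n0: "real n > 0" using m by simp
      have x0: "x0 > 0" using a 3 n0 by (simp add: x0_def c0_def)
      have lim: "(\<lambda>k. \<psi> (x0 * (real k + 1) / (real k + 2))) \<longlonglongrightarrow> \<psi> x0"
      proof -
        have t: "(\<lambda>k. x0 * (real k + 1) / (real k + 2)) \<longlonglongrightarrow> x0" by real_asymp
        have "(\<lambda>k. q (x0 * (real k + 1) / (real k + 2))) \<longlonglongrightarrow> q x0"
          by (rule continuous_on_tendsto_compose[OF q_cont t]) auto
        moreover have "q (x0 * (real k + 1) / (real k + 2)) = \<psi> (x0 * (real k + 1) / (real k + 2))" for k
          using x0 by (intro q_pos) simp
        ultimately show ?thesis using x0 by (simp add: q_pos)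
      qed
      have le: "measure M A * \<psi> (x0 * (real k + 1) / (real k + 2)) \<le> 1" for k
      proof -
        define cc where "cc = c0 * (real k + 2) / (real k + 1)"
        have r: "1 < (real k + 2) / (real k + 1)" by (simp add: field_simps)
        have "c0 * 1 < c0 * ((real k + 2) / (real k + 1))"
          using r 3 unfolding c0_def by (intro mult_strict_left_mono) auto
        then have "c0 < cc" by (simp add: cc_def)
        then have cc: "cc > 0" "cc > w * \<gamma> m" using 3 by (auto simp: c0_def)
        have "a / (2 * real n * cc) = x0 * (real k + 1) / (real k + 2)"
          by (simp add: cc_def x0_def field_simps)
        then show ?thesis using mainb[OF cc] by simp
      qed
      have "measure M A * \<psi> x0 \<le> 1"
        by (rule LIMSEQ_le_const2[OF tendsto_mult_left[OF lim]]) (use le in auto)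
      then show ?thesis by (simp add: x0_def c0_def mult.assoc)
    qed
  qed
qed

end
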